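(* Let $\mu$ be a classification problem and $f:\mathcal X\times\mathcal A\to\Delta_k$ a deterministic calibrated predictor with $r_a:=f\sharp(\mu^X_a\times\{a\})$, and let $q^*\in\arg\min_{q\in\mathcal Q_k}\sum_aW_1(r_a,q)$, $\mathrm{Err}^*_f:=\frac12\sum_aW_1(r_a,q^* )$. Let $\rho$ be an absolutely continuous probability distribution on $\mathbb R^k$ with finite first moment, and let $u$ be the randomized map $u(s)=s+N$, $N\sim\rho$ independent. Let $\tilde r_a:=u\sharp r_a$ (the law of $S+N$, $S\sim r_a$), and let $T_a:\mathbb R^k\to\mathcal Y$ be the randomized function induced by an optimal coupling in $\Gamma(\tilde r_a,q^* )$ for the cost $\|s-y\|_1$ (kernel = regular conditional distribution of the coupling given the first coordinate). Define $\bar h_\rho(x,a)=T_a(u(f(x,a)))$. Then $$0\le\sum_{a\in[m]}\mathrm{Err}_a(\bar h_\rho)-\mathrm{Err}^*_f\le m\cdot\mathbb E_{N\sim\rho}[\|N\|_1].$$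
   Context: Setup. $\mathcal X$ is a standard Borel space, $k\ge 2$, $\mathcal Y=\{e_1,\dots,e_k\}\subset\mathbb R^k$ the standard basis vectors, $\mathcal A=[m]$. A classification problem is a probability distribution $\mu$ of $(X,Y,A)$ on $\mathcal X\times\mathcal Y\times\mathcal A$ with $\mathbb P(A=a)>0$ for all $a$; $\mu^X_a$ is the law of $X$ given $A=a$. $\Delta_k=\{x\in\mathbb R^k:x\ge0,\sum_ix_i=1\}$. For a deterministic predictor $f$, $f\sharp(\mu^X_a\times\{a\})$ is the law of $f(X,a)$, $X\sim\mu^X_a$. $f$ is calibrated if for every $a$ and $i$, $\mathbb P_\mu(Y=e_i\mid f(X,A)=s,A=a)=s_i$ for $r_a$-a.e. $s$. Randomized functions are given by Markov kernels, with randomness independent of $(X,Y,A)$; the push-forward of $p$ by a randomized map with kernel $K$ is $B\mapsto\int K(s,B)dp(s)$. $\mathrm{Err}_a(h)=\mathbb P(h(X,a)\ne Y\mid A=a)$. $\mathcal Q_k$ is the set of distributions supported on $\mathcal Y$, $\Gamma(p,q)$ the couplings, $W_1(p,q)=\inf_{\gamma\in\Gamma(p,q)}\int\|s-s'\|_1d\gamma$. *)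

theory Defs
  imports "HOL-Probability.Probability"
begin

definition Ycal :: "(real^'k) set" where
  "Ycal = {axis i 1 | i. True}"

definition prob_simplex :: "(real^'k) set" where
  "prob_simplex = {s. (\<forall>i. 0 \<le> s $ i) \<and> (\<Sum>i\<in>UNIV. s $ i) = 1}"

definition l1 :: "real^'k \<Rightarrow> real" where
  "l1 v = (\<Sum>i\<in>UNIV. \<bar>v $ i\<bar>)"

text \<open>A classification problem: a probability distribution mu of (X,Y,A) on
  X x Y x [m], with the product sigma algebra; components of z are
  X = fst z, Y = fst (snd z), A = snd (snd z).\<close>
definition classification_problem ::
  "nat \<Rightarrow> ('x::polish_space \<times> (real^'k) \<times> nat) measure \<Rightarrow> bool" where
  "classification_problem m \<mu> \<longleftrightarrow>
     prob_space \<mu> \<and>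
     sets \<mu> = sets (borel \<Otimes>\<^sub>M (borel \<Otimes>\<^sub>M count_space UNIV)) \<and>
     (AE z in \<mu>. fst (snd z) \<in> Ycal \<and> snd (snd z) \<in> {1..m}) \<and>
     (\<forall>a\<in>{1..m}. measure \<mu> {z \<in> space \<mu>. snd (snd z) = a} > 0)"

definition probA :: "('x \<times> (real^'k) \<times> nat) measure \<Rightarrow> nat \<Rightarrow> real" where
  "probA \<mu> a = measure \<mu> {z \<in> space \<mu>. snd (snd z) = a}"

definition muX :: "('x::polish_space \<times> (real^'k) \<times> nat) measure \<Rightarrow> nat \<Rightarrow> 'x measure" where
  "muX \<mu> a = scale_measure (1 / ennreal (probA \<mu> a))
      (distr (density \<mu> (indicator {z. snd (snd z) = a})) borel fst)"

definition pushf :: "('x::polish_space \<times> (real^'k) \<times> nat) measure \<Rightarrow> ('x \<Rightarrow> nat \<Rightarrow> real^'k)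
     \<Rightarrow> nat \<Rightarrow> (real^'k) measure" where
  "pushf \<mu> f a = distr (muX \<mu> a) borel (\<lambda>x. f x a)"

definition det_predictor :: "('x::polish_space \<Rightarrow> nat \<Rightarrow> real^'k) \<Rightarrow> bool" where
  "det_predictor f \<longleftrightarrow> (\<forall>a. (\<lambda>x. f x a) \<in> borel_measurable borel) \<and> (\<forall>x a. f x a \<in> prob_simplex)"

text \<open>Calibration: for every a and i, P(Y = e_i | f(X,A) = s, A = a) = s_i for r_a-a.e. s,
  expressed through the defining property of conditional probability:
  P(Y = e_i, f(X,a) \<in> B, A = a) = P(A = a) * \<integral>_B s_i dr_a(s) for every Borel B.\<close>
definition calibrated :: "nat \<Rightarrow> ('x::polish_space \<times> (real^'k) \<times> nat) measure
     \<Rightarrow> ('x \<Rightarrow> nat \<Rightarrow> real^'k) \<Rightarrow> bool" where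
  "calibrated m \<mu> f \<longleftrightarrow>
     (\<forall>a\<in>{1..m}. \<forall>i. \<forall>B\<in>sets borel.
        measure \<mu> {z \<in> space \<mu>. fst (snd z) = axis i 1 \<and> f (fst z) a \<in> B \<and> snd (snd z) = a}
        = probA \<mu> a * (LINT s:B|pushf \<mu> f a. s $ i))"

text \<open>Push-forward of a distribution p by a randomized map with Markov kernel K:
  B \<mapsto> \<integral> K(s,B) dp(s).\<close>
definition push_kernel :: "'a measure \<Rightarrow> ('a \<Rightarrow> 'b measure) \<Rightarrow> 'b measure" where
  "push_kernel p K = p \<bind> K"

definition noise_kernel :: "(real^'k) measure \<Rightarrow> real^'k \<Rightarrow> (real^'k) measure" where
  "noise_kernel \<rho> s = distr \<rho> borel (\<lambda>n. s + n)"

text \<open>Error of a randomized predictor with output kernel H (H x a = law of h(x,a)),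
  randomness independent of (X,Y,A): P(h(X,a) \<noteq> Y | A = a).\<close>
definition Err :: "('x \<times> (real^'k) \<times> nat) measure \<Rightarrow> ('x \<Rightarrow> nat \<Rightarrow> (real^'k) measure)
     \<Rightarrow> nat \<Rightarrow> real" where
  "Err \<mu> H a = (\<integral>z. indicator {z. snd (snd z) = a} z
                    * measure (H (fst z) a) (UNIV - {fst (snd z)}) \<partial>\<mu>) / probA \<mu> a"

definition Qk :: "(real^'k) measure set" where
  "Qk = {q. prob_space q \<and> sets q = sets borel \<and> emeasure q Ycal = 1}"

definition couplings :: "(real^'k) measure \<Rightarrow> (real^'k) measure \<Rightarrow> ((real^'k) \<times> (real^'k)) measure set" where
  "couplings p q = {\<gamma>. prob_space \<gamma> \<and> sets \<gamma> = sets (borel \<Otimes>\<^sub>M borel) \<and>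
                        distr \<gamma> borel fst = p \<and> distr \<gamma> borel snd = q}"

definition transport_cost :: "((real^'k) \<times> (real^'k)) measure \<Rightarrow> ennreal" where
  "transport_cost \<gamma> = (\<integral>\<^sup>+ z. ennreal (l1 (fst z - snd z)) \<partial>\<gamma>)"

text \<open>W_1 with l1 cost (as extended nonnegative value, and its real value; all W_1
  values occurring in the statement are finite).\<close>
definition W1e :: "(real^'k) measure \<Rightarrow> (real^'k) measure \<Rightarrow> ennreal" where
  "W1e p q = (INF \<gamma>\<in>couplings p q. transport_cost \<gamma>)"

definition W1 :: "(real^'k) measure \<Rightarrow> (real^'k) measure \<Rightarrow> real" where
  "W1 p q = enn2real (W1e p q)"

definition rcd_first :: "((real^'k) \<times> (real^'k)) measure \<Rightarrow> (real^'k) measure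
     \<Rightarrow> (real^'k \<Rightarrow> (real^'k) measure) \<Rightarrow> bool" where
  "rcd_first \<gamma> p K \<longleftrightarrow>
     K \<in> borel \<rightarrow>\<^sub>M prob_algebra borel \<and>
     (\<forall>A\<in>sets borel. \<forall>B\<in>sets borel.
        emeasure \<gamma> (A \<times> B) = (\<integral>\<^sup>+ s. indicator A s * emeasure (K s) B \<partial>p))"

end

theory Submission
  imports Defs
begin

lemma l1_meas[measurable]: "l1 \<in> borel_measurable (borel :: (real^'k) measure)"
  unfolding l1_def by measurable

lemma l1_nonneg: "0 \<le> l1 v" unfolding l1_def by (simp add: sum_nonneg)

lemma l1_triangle: "l1 (a - c) \<le> l1 (a - b) + l1 (b - (c::real^'k))"
  unfolding l1_def by (simp add: sum.distrib[symmetric] sum_mono abs_triangle_ineq4)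

lemma l1_add: "l1 (a + b) \<le> l1 a + l1 (b::real^'k)"
  unfolding l1_def by (simp add: sum.distrib[symmetric] sum_mono abs_triangle_ineq)

lemma noise_meas:
  assumes "prob_space \<rho>" "sets \<rho> = sets borel"
  shows "noise_kernel \<rho> \<in> (borel :: (real^'k) measure) \<rightarrow>\<^sub>M prob_algebra borel"
proof (rule measurable_prob_algebraI)
  show "prob_space (noise_kernel \<rho> x)" for x
    unfolding noise_kernel_def using assms by (intro prob_space.prob_space_distr) auto
  have [measurable]: "\<rho> \<in> space (subprob_algebra borel)"
    using assms by (simp add: space_subprob_algebra prob_space_imp_subprob_space)
  show "noise_kernel \<rho> \<in> borel \<rightarrow>\<^sub>M subprob_algebra borel"
    unfolding noise_kernel_def
    by (rule measurable_distr2[where M=borel]) (auto intro!: measurable_const)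
qed

lemma nn_integral_const_add_prob:
  assumes "prob_space M" "sets M = sets (borel::'b::topological_space measure)"
    and g: "g \<in> borel_measurable (borel::'b measure)"
  shows "(\<integral>\<^sup>+x. c + g x \<partial>M) = c + integral\<^sup>N M g"
proof -
  have gm: "g \<in> borel_measurable M" using g measurable_cong_sets[OF assms(2) refl] by blast
  have "(\<integral>\<^sup>+x. c + g x \<partial>M) = (\<integral>\<^sup>+x. c \<partial>M) + integral\<^sup>N M g"
    by (rule nn_integral_add) (use gm in auto)
  also have "(\<integral>\<^sup>+x. c \<partial>M) = c" using assms(1) by (simp add: prob_space.emeasure_space_1)
  finally show ?thesis .
qed

lemma nn_integral_add_const_prob:
  assumes "prob_space M" and g: "g \<in> borel_measurable M"
  shows "(\<integral>\<^sup>+x. g x + c \<partial>M) = integral\<^sup>N M g + c"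
proof -
  have "(\<integral>\<^sup>+x. g x + c \<partial>M) = integral\<^sup>N M g + (\<integral>\<^sup>+x. c \<partial>M)"
    by (rule nn_integral_add) (use g in auto)
  also have "(\<integral>\<^sup>+x. c \<partial>M) = c" using assms(1) by (simp add: prob_space.emeasure_space_1)
  finally show ?thesis .
qed

lemma W1e_noise:
  fixes r q :: "(real^'k) measure"
  assumes rho: "prob_space \<rho>" "sets \<rho> = sets borel"
    and \<pi>0: "\<pi>0 \<in> couplings r q"
  shows "W1e (r \<bind> noise_kernel \<rho>) q \<le> transport_cost \<pi>0 + (\<integral>\<^sup>+n. ennreal (l1 n) \<partial>\<rho>)"
proof -
  from \<pi>0 have p0: "prob_space \<pi>0" and s0: "sets \<pi>0 = sets (borel \<Otimes>\<^sub>M borel)"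
    and m1: "distr \<pi>0 borel fst = r" and m2: "distr \<pi>0 borel snd = q"
    unfolding couplings_def by auto
  define L where "L = (\<lambda>w::(real^'k)\<times>(real^'k). distr \<rho> (borel \<Otimes>\<^sub>M borel) (\<lambda>n. (fst w + n, snd w)))"
  have rsub[measurable]: "\<rho> \<in> space (subprob_algebra borel)"
    using rho by (simp add: space_subprob_algebra prob_space_imp_subprob_space)
  have Lsub: "L \<in> (borel \<Otimes>\<^sub>M borel) \<rightarrow>\<^sub>M subprob_algebra (borel \<Otimes>\<^sub>M borel)"
    unfolding L_def by (rule measurable_distr2[where M=borel]) (auto intro!: measurable_const)
  have Lprob: "L \<in> (borel \<Otimes>\<^sub>M borel) \<rightarrow>\<^sub>M prob_algebra (borel \<Otimes>\<^sub>M borel)"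
    by (rule measurable_prob_algebraI[OF _ Lsub]) (use rho in \<open>auto simp: L_def intro!: prob_space.prob_space_distr\<close>)
  have p0sp: "\<pi>0 \<in> space (prob_algebra (borel \<Otimes>\<^sub>M borel))"
    using p0 s0 by (simp add: space_prob_algebra)
  have ne: "space \<pi>0 \<noteq> {}" using p0 prob_space.not_empty by blast
  have Lsub0: "L \<in> \<pi>0 \<rightarrow>\<^sub>M subprob_algebra (borel \<Otimes>\<^sub>M borel)"
    using Lsub measurable_cong_sets[OF s0 refl] by blast
  define \<pi> where "\<pi> = \<pi>0 \<bind> L"
  have N: "noise_kernel \<rho> \<in> (borel :: (real^'k) measure) \<rightarrow>\<^sub>M prob_algebra borel"
    by (rule noise_meas[OF rho])
  have Nsub: "noise_kernel \<rho> \<in> (borel :: (real^'k) measure) \<rightarrow>\<^sub>M subprob_algebra borel"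
    using N measurable_prob_algebraD by blast
  have fst0: "fst \<in> \<pi>0 \<rightarrow>\<^sub>M (borel :: (real^'k) measure)"
    by (subst measurable_cong_sets[OF s0 refl]) measurable
  have snd0: "snd \<in> \<pi>0 \<rightarrow>\<^sub>M (borel :: (real^'k) measure)"
    by (subst measurable_cong_sets[OF s0 refl]) measurable
  have "\<pi> \<in> couplings (r \<bind> noise_kernel \<rho>) q"
    unfolding couplings_def
  proof (intro CollectI conjI)
    show "prob_space \<pi>" unfolding \<pi>_def by (rule prob_space_bind'[OF p0sp Lprob])
    show "sets \<pi> = sets (borel \<Otimes>\<^sub>M borel)" unfolding \<pi>_def by (rule sets_bind'[OF p0sp Lprob])
    have "distr \<pi> borel fst = \<pi>0 \<bind> (\<lambda>w. distr (L w) borel fst)"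
      unfolding \<pi>_def by (rule distr_bind[OF Lsub0 ne]) simp
    also have "\<dots> = \<pi>0 \<bind> (\<lambda>w. noise_kernel \<rho> (fst w))"
    proof (rule bind_cong)
      fix w :: "(real^'k)\<times>(real^'k)"
      have "distr (L w) borel fst = distr \<rho> borel (fst \<circ> (\<lambda>n. (fst w + n, snd w)))"
        unfolding L_def by (rule distr_distr) (auto simp: measurable_cong_sets[OF rho(2) refl])
      then show "distr (L w) borel fst = noise_kernel \<rho> (fst w)"
        by (simp add: noise_kernel_def comp_def)
    qed simp
    also have "\<dots> = distr \<pi>0 borel fst \<bind> noise_kernel \<rho>"
      by (rule bind_distr[OF fst0 Nsub ne, symmetric])
    finally show "distr \<pi> borel fst = r \<bind> noise_kernel \<rho>" using m1 by simp
    have "distr \<pi> borel snd = \<pi>0 \<bind> (\<lambda>w. distr (L w) borel snd)"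
      unfolding \<pi>_def by (rule distr_bind[OF Lsub0 ne]) simp
    also have "\<dots> = \<pi>0 \<bind> (\<lambda>w. return borel (snd w))"
    proof (rule bind_cong)
      fix w :: "(real^'k)\<times>(real^'k)"
      have "distr (L w) borel snd = distr \<rho> borel (snd \<circ> (\<lambda>n. (fst w + n, snd w)))"
        unfolding L_def by (rule distr_distr) (auto simp: measurable_cong_sets[OF rho(2) refl])
      then show "distr (L w) borel snd = return borel (snd w)"
        using rho by (simp add: comp_def prob_space.distr_const)
    qed simp
    also have "\<dots> = distr \<pi>0 borel snd"
      by (rule bind_return_distr'[OF ne snd0])
    finally show "distr \<pi> borel snd = q" using m2 by simp
  qed
  then have "W1e (r \<bind> noise_kernel \<rho>) q \<le> transport_cost \<pi>"
    unfolding W1e_def by (rule INF_lower)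
  also have "transport_cost \<pi> = (\<integral>\<^sup>+w. \<integral>\<^sup>+z. ennreal (l1 (fst z - snd z)) \<partial>L w \<partial>\<pi>0)"
    unfolding transport_cost_def \<pi>_def by (rule nn_integral_bind[OF _ Lsub0]) measurable
  also have "\<dots> = (\<integral>\<^sup>+w. \<integral>\<^sup>+n. ennreal (l1 (fst w + n - snd w)) \<partial>\<rho> \<partial>\<pi>0)"
    unfolding L_def
  proof (rule nn_integral_cong)
    fix w :: "(real^'k)\<times>(real^'k)"
    show "(\<integral>\<^sup>+z. ennreal (l1 (fst z - snd z)) \<partial>distr \<rho> (borel \<Otimes>\<^sub>M borel) (\<lambda>n. (fst w + n, snd w)))
       = (\<integral>\<^sup>+n. ennreal (l1 (fst w + n - snd w)) \<partial>\<rho>)"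
      by (subst nn_integral_distr) (simp_all add: measurable_cong_sets[OF rho(2) refl])
  qed
  also have "\<dots> \<le> (\<integral>\<^sup>+w. ennreal (l1 (fst w - snd w)) + (\<integral>\<^sup>+n. ennreal (l1 n) \<partial>\<rho>) \<partial>\<pi>0)"
  proof (rule nn_integral_mono)
    fix w :: "(real^'k)\<times>(real^'k)"
    have "(\<integral>\<^sup>+n. ennreal (l1 (fst w + n - snd w)) \<partial>\<rho>) \<le> (\<integral>\<^sup>+n. ennreal (l1 (fst w - snd w)) + ennreal (l1 n) \<partial>\<rho>)"
    proof (rule nn_integral_mono)
      fix n
      have "l1 (fst w + n - snd w) \<le> l1 (fst w - snd w) + l1 n"
        using l1_add[of "fst w - snd w" n] by (simp add: algebra_simps)
      then show "ennreal (l1 (fst w + n - snd w)) \<le> ennreal (l1 (fst w - snd w)) + ennreal (l1 n)"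
        by (simp add: l1_nonneg flip: ennreal_plus)
    qed
    also have "\<dots> = ennreal (l1 (fst w - snd w)) + (\<integral>\<^sup>+n. ennreal (l1 n) \<partial>\<rho>)"
      by (rule nn_integral_const_add_prob[OF rho]) simp
    finally show "(\<integral>\<^sup>+n. ennreal (l1 (fst w + n - snd w)) \<partial>\<rho>) \<le> ennreal (l1 (fst w - snd w)) + (\<integral>\<^sup>+n. ennreal (l1 n) \<partial>\<rho>)" .
  qed
  also have "\<dots> = transport_cost \<pi>0 + (\<integral>\<^sup>+n. ennreal (l1 n) \<partial>\<rho>)"
    unfolding transport_cost_def
    by (rule nn_integral_add_const_prob[OF p0]) (simp add: measurable_cong_sets[OF s0 refl])
  finally show ?thesis .
qed
lemma ennreal_le_INF_add:
  assumes "\<And>x. x\<in>I \<Longrightarrow> (a::ennreal) \<le> g x + c"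
  shows "a \<le> (INF x\<in>I. g x) + c"
proof (cases "c = top")
  case True then show ?thesis by simp
next
  case False
  have "a - c \<le> (INF x\<in>I. g x)"
  proof (rule INF_greatest)
    fix x assume "x \<in> I"
    then show "a - c \<le> g x" using assms[of x] False by (simp add: ennreal_minus_le_iff add.commute)
  qed
  then show ?thesis by (simp add: ennreal_minus_le_iff add.commute)
qed

lemma W1e_noise_le:
  fixes r q :: "(real^'k) measure"
  assumes rho: "prob_space \<rho>" "sets \<rho> = sets borel"
  shows "W1e (r \<bind> noise_kernel \<rho>) q \<le> W1e r q + (\<integral>\<^sup>+n. ennreal (l1 n) \<partial>\<rho>)"
  unfolding W1e_def[of r q]
  by (rule ennreal_le_INF_add, rule W1e_noise[OF rho])

lemma rcd_eq:
  fixes p :: "(real^'k) measure"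
  assumes rcd: "rcd_first \<gamma> p K" and p: "prob_space p" "sets p = sets borel"
    and sg: "sets \<gamma> = sets (borel \<Otimes>\<^sub>M borel)"
  shows "\<gamma> = p \<bind> (\<lambda>t. distr (K t) (borel \<Otimes>\<^sub>M borel) (Pair t))"
proof -
  have K: "K \<in> borel \<rightarrow>\<^sub>M prob_algebra borel" and R: "\<And>A B. A \<in> sets borel \<Longrightarrow> B \<in> sets borel \<Longrightarrow>
        emeasure \<gamma> (A \<times> B) = (\<integral>\<^sup>+ s. indicator A s * emeasure (K s) B \<partial>p)"
    using rcd unfolding rcd_first_def by auto
  have Ks[measurable]: "K \<in> borel \<rightarrow>\<^sub>M subprob_algebra borel" using K measurable_prob_algebraD by blast
  define L where "L = (\<lambda>t::real^'k. distr (K t) (borel \<Otimes>\<^sub>M borel) (Pair t))"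
  have Lm: "L \<in> (borel::(real^'k) measure) \<rightarrow>\<^sub>M subprob_algebra (borel \<Otimes>\<^sub>M borel)"
    unfolding L_def by (rule measurable_distr2[where M=borel]) measurable
  have Lp: "L \<in> p \<rightarrow>\<^sub>M subprob_algebra (borel \<Otimes>\<^sub>M borel)"
    using Lm measurable_cong_sets[OF p(2) refl] by blast
  have ne: "space p \<noteq> {}" using p prob_space.not_empty by blast
  have sK: "\<And>t. sets (K t) = sets borel"
    using K by (auto dest!: measurable_space simp: space_prob_algebra)
  have Kp: "\<And>t. prob_space (K t)"
    using K by (auto dest!: measurable_space simp: space_prob_algebra)
  have K1: "\<And>t. emeasure (K t) UNIV = 1"
    using Kp sets_eq_imp_space_eq[OF sK] by (metis prob_space.emeasure_space_1 space_borel)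
  let ?E = "{a \<times> b | a b. a \<in> sets (borel::(real^'k) measure) \<and> b \<in> sets (borel::(real^'k) measure)}"
  show ?thesis
    unfolding L_def[symmetric]
  proof (rule measure_eqI_generator_eq[where E="?E" and \<Omega>="UNIV" and A="\<lambda>_. UNIV"])
    show "Int_stable ?E" by (rule Int_stable_pair_measure_generator)
    show "?E \<subseteq> Pow UNIV" by auto
    show "sets \<gamma> = sigma_sets UNIV ?E" using sg by (simp add: sets_pair_measure)
    have "sets (p \<bind> L) = sets (borel \<Otimes>\<^sub>M borel)"
      by (rule sets_bind[OF sets_kernel[OF Lp] ne])
    then show "sets (p \<bind> L) = sigma_sets UNIV ?E" by (simp add: sets_pair_measure)
    show "range (\<lambda>_. UNIV) \<subseteq> ?E" by (auto intro!: exI[of _ UNIV])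
    show "(\<Union>i. UNIV) = UNIV" by simp
    have "emeasure \<gamma> (UNIV \<times> UNIV) = (\<integral>\<^sup>+ s. emeasure (K s) UNIV \<partial>p)"
      using R[of UNIV UNIV] by simp
    also have "\<dots> = (\<integral>\<^sup>+ s. 1 \<partial>p)"
      by (simp add: K1)
    finally show "emeasure \<gamma> UNIV \<noteq> \<infinity>" using p by (simp add: prob_space.emeasure_space_1)
    fix X assume "X \<in> ?E"
    then obtain A B where X: "X = A \<times> B" and A: "A \<in> sets borel" and B: "B \<in> sets borel" by auto
    have "emeasure (p \<bind> L) X = (\<integral>\<^sup>+t. emeasure (L t) X \<partial>p)"
      by (rule emeasure_bind[OF ne Lp]) (simp add: X A B)
    also have "\<dots> = (\<integral>\<^sup>+ s. indicator A s * emeasure (K s) B \<partial>p)"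
    proof (rule nn_integral_cong)
      fix t :: "real^'k"
      have "emeasure (L t) X = emeasure (K t) (Pair t -` X \<inter> space (K t))"
        unfolding L_def by (rule emeasure_distr) (auto simp: X A B measurable_cong_sets[OF sK refl])
      also have "\<dots> = indicator A t * emeasure (K t) B"
        using sets_eq_imp_space_eq[OF sK] by (auto simp: X indicator_def)
      finally show "emeasure (L t) X = indicator A t * emeasure (K t) B" .
    qed
    finally show "emeasure \<gamma> X = emeasure (p \<bind> L) X" using R[OF A B] X by simp
  qed
qed

lemma core:
  fixes r q \<rho> :: "(real^'k) measure"
  assumes r: "prob_space r" "sets r = sets borel"
    and rho: "prob_space \<rho>" "sets \<rho> = sets borel"
    and g: "\<gamma> \<in> couplings (r \<bind> noise_kernel \<rho>) q" "transport_cost \<gamma> = W1e (r \<bind> noise_kernel \<rho>) q"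
    and K: "rcd_first \<gamma> (r \<bind> noise_kernel \<rho>) K"
  shows "r \<bind> (\<lambda>s. noise_kernel \<rho> s \<bind> K) = q"
    and "W1e r q \<le> (\<integral>\<^sup>+s. \<integral>\<^sup>+y. ennreal (l1 (s - y)) \<partial>(noise_kernel \<rho> s \<bind> K) \<partial>r)"
    and "(\<integral>\<^sup>+s. \<integral>\<^sup>+y. ennreal (l1 (s - y)) \<partial>(noise_kernel \<rho> s \<bind> K) \<partial>r)
           \<le> W1e r q + 2 * (\<integral>\<^sup>+n. ennreal (l1 n) \<partial>\<rho>)"
proof -
  define N where "N = noise_kernel \<rho>"
  define p where "p = r \<bind> N"
  define Hs where "Hs = (\<lambda>s. N s \<bind> K)"
  have Np: "N \<in> (borel :: (real^'k) measure) \<rightarrow>\<^sub>M prob_algebra borel"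
    unfolding N_def by (rule noise_meas[OF rho])
  have Ns: "N \<in> (borel :: (real^'k) measure) \<rightarrow>\<^sub>M subprob_algebra borel"
    using Np measurable_prob_algebraD by blast
  have Kp: "K \<in> (borel :: (real^'k) measure) \<rightarrow>\<^sub>M prob_algebra borel"
    using K unfolding rcd_first_def by auto
  have Ks: "K \<in> (borel :: (real^'k) measure) \<rightarrow>\<^sub>M subprob_algebra borel"
    using Kp measurable_prob_algebraD by blast
  have Hp: "Hs \<in> (borel :: (real^'k) measure) \<rightarrow>\<^sub>M prob_algebra borel"
    unfolding Hs_def by (rule measurable_bind_prob_space[OF Np Kp])
  have Hsub: "Hs \<in> (borel :: (real^'k) measure) \<rightarrow>\<^sub>M subprob_algebra borel"
    using Hp measurable_prob_algebraD by blast
  have rsp: "r \<in> space (prob_algebra borel)" using r by (simp add: space_prob_algebra)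
  have rne: "space r \<noteq> {}" using r prob_space.not_empty by blast
  have Nr: "N \<in> r \<rightarrow>\<^sub>M subprob_algebra borel" using Ns measurable_cong_sets[OF r(2) refl] by blast
  have Hr: "Hs \<in> r \<rightarrow>\<^sub>M subprob_algebra borel" using Hsub measurable_cong_sets[OF r(2) refl] by blast
  have psp: "p \<in> space (prob_algebra borel)"
    unfolding p_def using prob_space_bind'[OF rsp Np] sets_bind'[OF rsp Np] by (simp add: space_prob_algebra)
  then have pp: "prob_space p" and ps: "sets p = sets borel" by (auto simp: space_prob_algebra)
  have pne: "space p \<noteq> {}" using pp prob_space.not_empty by blast
  have Kpp: "K \<in> p \<rightarrow>\<^sub>M subprob_algebra borel" using Ks measurable_cong_sets[OF ps refl] by blast
  from g have sg: "sets \<gamma> = sets (borel \<Otimes>\<^sub>M borel)" and gsnd: "distr \<gamma> borel snd = q"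
    unfolding couplings_def by auto
  have geq: "\<gamma> = p \<bind> (\<lambda>t. distr (K t) (borel \<Otimes>\<^sub>M borel) (Pair t))"
    unfolding p_def N_def by (rule rcd_eq[OF K _ _ sg]) (use pp ps in \<open>auto simp: p_def N_def\<close>)
  have Lm: "(\<lambda>t. distr (K t) (borel \<Otimes>\<^sub>M borel) (Pair t)) \<in> (borel::(real^'k) measure) \<rightarrow>\<^sub>M subprob_algebra (borel \<Otimes>\<^sub>M borel)"
    by (rule measurable_distr2[where M=borel]) (use Ks in measurable)
  have Lp: "(\<lambda>t. distr (K t) (borel \<Otimes>\<^sub>M borel) (Pair t)) \<in> p \<rightarrow>\<^sub>M subprob_algebra (borel \<Otimes>\<^sub>M borel)"
    using Lm measurable_cong_sets[OF ps refl] by blast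
  have sK: "\<And>t. sets (K t) = sets borel"
    using Kp by (auto dest!: measurable_space simp: space_prob_algebra)
  have "distr \<gamma> borel snd = p \<bind> (\<lambda>t. distr (distr (K t) (borel \<Otimes>\<^sub>M borel) (Pair t)) borel snd)"
    unfolding geq by (rule distr_bind[OF Lp pne]) simp
  also have "\<dots> = p \<bind> K"
  proof (rule bind_cong)
    fix t :: "real^'k"
    have "distr (distr (K t) (borel \<Otimes>\<^sub>M borel) (Pair t)) borel snd = distr (K t) borel (snd \<circ> Pair t)"
      by (rule distr_distr) (auto simp: measurable_cong_sets[OF sK refl])
    also have "\<dots> = distr (K t) borel (\<lambda>x. x)" by (simp add: comp_def)
    also have "\<dots> = K t" using sK[of t] by (metis distr_id2)
    finally show "distr (distr (K t) (borel \<Otimes>\<^sub>M borel) (Pair t)) borel snd = K t" .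
  qed simp
  finally have pK: "p \<bind> K = q" using gsnd by simp
  have rH: "r \<bind> Hs = q"
    unfolding Hs_def using pK unfolding p_def by (simp add: bind_assoc[OF Nr Ks])
  then show "r \<bind> (\<lambda>s. noise_kernel \<rho> s \<bind> K) = q" by (simp add: Hs_def N_def)
  have sH: "\<And>s. sets (Hs s) = sets borel"
    using Hp by (auto dest!: measurable_space simp: space_prob_algebra)
  have pH: "\<And>s. prob_space (Hs s)"
    using Hp by (auto dest!: measurable_space simp: space_prob_algebra)
  define L2 where "L2 = (\<lambda>s. distr (Hs s) (borel \<Otimes>\<^sub>M borel) (Pair s))"
  have L2m: "L2 \<in> (borel::(real^'k) measure) \<rightarrow>\<^sub>M subprob_algebra (borel \<Otimes>\<^sub>M borel)"
    unfolding L2_def by (rule measurable_distr2[where M=borel]) (use Hsub in measurable)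
  have L2p: "L2 \<in> (borel::(real^'k) measure) \<rightarrow>\<^sub>M prob_algebra (borel \<Otimes>\<^sub>M borel)"
    by (rule measurable_prob_algebraI[OF _ L2m])
       (auto simp: L2_def intro!: prob_space.prob_space_distr pH simp: measurable_cong_sets[OF sH refl])
  have L2r: "L2 \<in> r \<rightarrow>\<^sub>M subprob_algebra (borel \<Otimes>\<^sub>M borel)"
    using L2m measurable_cong_sets[OF r(2) refl] by blast
  define \<pi> where "\<pi> = r \<bind> L2"
  have "\<pi> \<in> couplings r q"
    unfolding couplings_def
  proof (intro CollectI conjI)
    show "prob_space \<pi>" unfolding \<pi>_def by (rule prob_space_bind'[OF rsp L2p])
    show "sets \<pi> = sets (borel \<Otimes>\<^sub>M borel)" unfolding \<pi>_def by (rule sets_bind'[OF rsp L2p])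
    have "distr \<pi> borel fst = r \<bind> (\<lambda>s. distr (L2 s) borel fst)"
      unfolding \<pi>_def by (rule distr_bind[OF L2r rne]) simp
    also have "\<dots> = r \<bind> return borel"
    proof (rule bind_cong)
      fix s :: "real^'k"
      have "distr (L2 s) borel fst = distr (Hs s) borel (fst \<circ> Pair s)"
        unfolding L2_def by (rule distr_distr) (auto simp: measurable_cong_sets[OF sH refl])
      then show "distr (L2 s) borel fst = return borel s"
        using pH[of s] by (simp add: comp_def prob_space.distr_const)
    qed simp
    also have "\<dots> = r" by (rule bind_return'') (simp add: r)
    finally show "distr \<pi> borel fst = r" .
    have "distr \<pi> borel snd = r \<bind> (\<lambda>s. distr (L2 s) borel snd)"
      unfolding \<pi>_def by (rule distr_bind[OF L2r rne]) simp
    also have "\<dots> = r \<bind> Hs"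
    proof (rule bind_cong)
      fix s :: "real^'k"
      have "distr (L2 s) borel snd = distr (Hs s) borel (snd \<circ> Pair s)"
        unfolding L2_def by (rule distr_distr) (auto simp: measurable_cong_sets[OF sH refl])
      also have "\<dots> = distr (Hs s) borel (\<lambda>x. x)" by (simp add: comp_def)
      also have "\<dots> = Hs s" using sH[of s] by (metis distr_id2)
      finally show "distr (L2 s) borel snd = Hs s" .
    qed simp
    finally show "distr \<pi> borel snd = q" using rH by simp
  qed
  then have "W1e r q \<le> transport_cost \<pi>" unfolding W1e_def by (rule INF_lower)
  also have "transport_cost \<pi> = (\<integral>\<^sup>+s. \<integral>\<^sup>+z. ennreal (l1 (fst z - snd z)) \<partial>L2 s \<partial>r)"
    unfolding transport_cost_def \<pi>_def by (rule nn_integral_bind[OF _ L2r]) measurable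
  also have "\<dots> = (\<integral>\<^sup>+s. \<integral>\<^sup>+y. ennreal (l1 (s - y)) \<partial>Hs s \<partial>r)"
  proof (rule nn_integral_cong)
    fix s :: "real^'k"
    show "(\<integral>\<^sup>+z. ennreal (l1 (fst z - snd z)) \<partial>L2 s) = (\<integral>\<^sup>+y. ennreal (l1 (s - y)) \<partial>Hs s)"
      unfolding L2_def by (subst nn_integral_distr) (simp_all add: measurable_cong_sets[OF sH refl])
  qed
  finally show "W1e r q \<le> (\<integral>\<^sup>+s. \<integral>\<^sup>+y. ennreal (l1 (s - y)) \<partial>(noise_kernel \<rho> s \<bind> K) \<partial>r)"
    by (simp add: Hs_def N_def)
  define EN where "EN = (\<integral>\<^sup>+n. ennreal (l1 n) \<partial>\<rho>)"
  define \<Phi> where "\<Phi> = (\<lambda>t::real^'k. \<integral>\<^sup>+y. ennreal (l1 (t - y)) \<partial>K t)"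
  have \<Phi>m: "\<Phi> \<in> borel_measurable (borel :: (real^'k) measure)"
    unfolding \<Phi>_def by (rule nn_integral_measurable_subprob_algebra2[OF _ Ks]) measurable
  have sN: "\<And>s. sets (N s) = sets borel"
    using Np by (auto dest!: measurable_space simp: space_prob_algebra)
  have pN: "\<And>s. prob_space (N s)"
    using Np by (auto dest!: measurable_space simp: space_prob_algebra)
  have pKt: "\<And>t. prob_space (K t)"
    using Kp by (auto dest!: measurable_space simp: space_prob_algebra)
  have step1: "(\<integral>\<^sup>+y. ennreal (l1 (s - y)) \<partial>Hs s) \<le> (\<integral>\<^sup>+t. ennreal (l1 (s - t)) + \<Phi> t \<partial>N s)" for s
  proof -
    have KN: "K \<in> N s \<rightarrow>\<^sub>M subprob_algebra borel" using Ks measurable_cong_sets[OF sN refl] by blast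
    have "(\<integral>\<^sup>+y. ennreal (l1 (s - y)) \<partial>Hs s) = (\<integral>\<^sup>+t. \<integral>\<^sup>+y. ennreal (l1 (s - y)) \<partial>K t \<partial>N s)"
      unfolding Hs_def by (rule nn_integral_bind[OF _ KN]) measurable
    also have "\<dots> \<le> (\<integral>\<^sup>+t. ennreal (l1 (s - t)) + \<Phi> t \<partial>N s)"
    proof (rule nn_integral_mono)
      fix t
      have "(\<integral>\<^sup>+y. ennreal (l1 (s - y)) \<partial>K t) \<le> (\<integral>\<^sup>+y. ennreal (l1 (s - t)) + ennreal (l1 (t - y)) \<partial>K t)"
        by (rule nn_integral_mono) (use l1_triangle[of s y t for y] in \<open>simp add: l1_nonneg flip: ennreal_plus\<close>)
      also have "\<dots> = ennreal (l1 (s - t)) + \<Phi> t"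
        unfolding \<Phi>_def by (rule nn_integral_const_add_prob[OF pKt sK]) measurable
      finally show "(\<integral>\<^sup>+y. ennreal (l1 (s - y)) \<partial>K t) \<le> ennreal (l1 (s - t)) + \<Phi> t" .
    qed
    finally show ?thesis .
  qed
  have step2: "(\<integral>\<^sup>+t. ennreal (l1 (s - t)) + \<Phi> t \<partial>N s) = EN + (\<integral>\<^sup>+t. \<Phi> t \<partial>N s)" for s
  proof -
    have "(\<integral>\<^sup>+t. ennreal (l1 (s - t)) + \<Phi> t \<partial>N s) = (\<integral>\<^sup>+t. ennreal (l1 (s - t)) \<partial>N s) + (\<integral>\<^sup>+t. \<Phi> t \<partial>N s)"
      by (rule nn_integral_add) (use \<Phi>m in \<open>auto simp: measurable_cong_sets[OF sN refl]\<close>)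
    also have "(\<integral>\<^sup>+t. ennreal (l1 (s - t)) \<partial>N s) = (\<integral>\<^sup>+n. ennreal (l1 (s - (s + n))) \<partial>\<rho>)"
      unfolding N_def noise_kernel_def
      by (subst nn_integral_distr) (simp_all add: measurable_cong_sets[OF rho(2) refl])
    also have "\<dots> = EN" unfolding EN_def by (simp add: l1_def)
    finally show ?thesis .
  qed
  have "(\<integral>\<^sup>+s. \<integral>\<^sup>+y. ennreal (l1 (s - y)) \<partial>Hs s \<partial>r) \<le> (\<integral>\<^sup>+s. EN + (\<integral>\<^sup>+t. \<Phi> t \<partial>N s) \<partial>r)"
    by (rule nn_integral_mono) (metis step1 step2)
  also have "\<dots> = EN + (\<integral>\<^sup>+s. \<integral>\<^sup>+t. \<Phi> t \<partial>N s \<partial>r)"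
    by (rule nn_integral_const_add_prob[OF r(1) r(2)])
       (rule nn_integral_measurable_subprob_algebra2[OF _ Ns], use \<Phi>m in measurable)
  also have "(\<integral>\<^sup>+s. \<integral>\<^sup>+t. \<Phi> t \<partial>N s \<partial>r) = (\<integral>\<^sup>+t. \<Phi> t \<partial>p)"
    unfolding p_def by (rule nn_integral_bind[OF \<Phi>m Nr, symmetric])
  also have "\<dots> = transport_cost \<gamma>"
  proof -
    have "transport_cost \<gamma> = (\<integral>\<^sup>+t. \<integral>\<^sup>+z. ennreal (l1 (fst z - snd z)) \<partial>distr (K t) (borel \<Otimes>\<^sub>M borel) (Pair t) \<partial>p)"
      unfolding transport_cost_def by (subst geq, rule nn_integral_bind[OF _ Lp]) measurable
    also have "\<dots> = (\<integral>\<^sup>+t. \<Phi> t \<partial>p)"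
    proof (rule nn_integral_cong)
      fix t :: "real^'k"
      show "(\<integral>\<^sup>+z. ennreal (l1 (fst z - snd z)) \<partial>distr (K t) (borel \<Otimes>\<^sub>M borel) (Pair t)) = \<Phi> t"
        unfolding \<Phi>_def by (subst nn_integral_distr) (simp_all add: measurable_cong_sets[OF sK refl])
    qed
    finally show ?thesis by simp
  qed
  also have "\<dots> = W1e p q" using g(2) by (simp add: p_def N_def)
  also have "\<dots> \<le> W1e r q + EN" unfolding p_def N_def EN_def by (rule W1e_noise_le[OF rho])
  finally have "(\<integral>\<^sup>+s. \<integral>\<^sup>+y. ennreal (l1 (s - y)) \<partial>Hs s \<partial>r) \<le> EN + (W1e r q + EN)"
    by (simp add: add_mono)
  then show "(\<integral>\<^sup>+s. \<integral>\<^sup>+y. ennreal (l1 (s - y)) \<partial>(noise_kernel \<rho> s \<bind> K) \<partial>r)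
           \<le> W1e r q + 2 * (\<integral>\<^sup>+n. ennreal (l1 n) \<partial>\<rho>)"
    by (simp add: Hs_def N_def EN_def mult_2 ac_simps)
qed

lemma Ycal_eq: "Ycal = range (\<lambda>i. axis i (1::real))"
  unfolding Ycal_def by auto

lemma finite_Ycal: "finite (Ycal :: (real^'k) set)"
  unfolding Ycal_eq by simp

lemma Ycal_sets[measurable]: "(Ycal :: (real^'k) set) \<in> sets borel"
  by (rule borel_closed[OF finite_imp_closed[OF finite_Ycal]])

lemma inj_axis1: "inj (\<lambda>i. axis i (1::real) :: real^'k)"
  by (auto intro!: injI simp: axis_eq_axis)

lemma l1_simplex_axis:
  assumes "s \<in> prob_simplex"
  shows "l1 (s - axis i 1) = 2 * (1 - s $ i)"
proof -
  from assms have nn: "\<And>j. 0 \<le> s $ j" and sum1: "(\<Sum>j\<in>UNIV. s $ j) = 1"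
    unfolding prob_simplex_def by auto
  have le1: "s $ i \<le> 1"
    using member_le_sum[of i UNIV "\<lambda>j. s $ j"] nn sum1 by auto
  have "l1 (s - axis i 1) = (\<Sum>j\<in>UNIV. s $ j + (if j = i then 1 - 2 * s $ j else 0))"
    unfolding l1_def by (rule sum.cong) (auto simp: axis_def nn le1)
  also have "\<dots> = 1 + (1 - 2 * s $ i)"
    by (simp add: sum.distrib sum1)
  finally show ?thesis by simp
qed

lemma pointwise:
  fixes s :: "real^'k" and M :: "(real^'k) measure"
  assumes M: "prob_space M" "sets M = sets borel" "emeasure M Ycal = 1" and s: "s \<in> prob_simplex"
  shows "(\<integral>\<^sup>+y. ennreal (l1 (s - y)) \<partial>M) = ennreal (2 * (\<Sum>i\<in>UNIV. s $ i * (1 - measure M {axis i 1})))"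
proof -
  interpret prob_space M by (rule M(1))
  have Ye: "Ycal \<in> events" using M(2) by simp
  have sing: "\<And>y. {y} \<in> sets M" using M(2) by simp
  have "prob Ycal = 1" using M(3) emeasure_eq_measure by simp
  then have ae: "AE y in M. y \<in> Ycal" using AE_in_set_eq_1[OF Ye] by simp
  have "(\<integral>\<^sup>+y. ennreal (l1 (s - y)) \<partial>M) = (\<integral>\<^sup>+y. ennreal (l1 (s - y)) * indicator Ycal y \<partial>M)"
    by (rule nn_integral_cong_AE) (use ae in \<open>auto simp: indicator_def\<close>)
  also have "\<dots> = (\<Sum>y\<in>Ycal. ennreal (l1 (s - y)) * emeasure M {y})"
    by (rule nn_integral_indicator_finite[OF finite_Ycal sing])
  also have "\<dots> = (\<Sum>i\<in>UNIV. ennreal (l1 (s - axis i 1)) * emeasure M {axis i 1})"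
    unfolding Ycal_eq by (subst sum.reindex[OF inj_axis1]) simp
  also have "\<dots> = (\<Sum>i\<in>UNIV. ennreal (2 * (1 - s $ i) * measure M {axis i 1}))"
  proof (rule sum.cong)
    fix i
    have "0 \<le> 2 * (1 - s $ i)" using l1_simplex_axis[OF s, of i] l1_nonneg[of "s - axis i 1"] by simp
    then show "ennreal (l1 (s - axis i 1)) * emeasure M {axis i 1} = ennreal (2 * (1 - s $ i) * measure M {axis i 1})"
      by (simp add: l1_simplex_axis[OF s] emeasure_eq_measure ennreal_mult)
  qed simp
  also have "\<dots> = ennreal (\<Sum>i\<in>UNIV. 2 * (1 - s $ i) * measure M {axis i 1})"
  proof (rule sum_ennreal)
    fix i
    have "0 \<le> 2 * (1 - s $ i)" using l1_simplex_axis[OF s, of i] l1_nonneg[of "s - axis i 1"] by simp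
    then show "0 \<le> 2 * (1 - s $ i) * measure M {axis i 1}" by simp
  qed
  also have "(\<Sum>i\<in>UNIV. 2 * (1 - s $ i) * measure M {axis i 1}) = 2 * (\<Sum>i\<in>UNIV. s $ i * (1 - measure M {axis i 1}))"
  proof -
    have "measure M Ycal = (\<Sum>y\<in>Ycal. measure M {y})"
      by (rule measure_eq_sum_singleton[OF finite_Ycal sing]) simp
    also have "\<dots> = (\<Sum>i\<in>UNIV. measure M {axis i 1})"
      unfolding Ycal_eq by (subst sum.reindex[OF inj_axis1]) simp
    finally have e1: "(\<Sum>i\<in>UNIV. measure M {axis i 1}) = 1" using \<open>prob Ycal = 1\<close> by simp
    have s1: "(\<Sum>j\<in>UNIV. s $ j) = 1" using s unfolding prob_simplex_def by auto
    have "(\<Sum>i\<in>UNIV. 2 * (1 - s $ i) * measure M {axis i 1})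
        = 2 * ((\<Sum>i\<in>UNIV. measure M {axis i 1}) - (\<Sum>i\<in>UNIV. s $ i * measure M {axis i 1}))"
      by (simp add: sum_distrib_left sum_subtractf algebra_simps)
    also have "\<dots> = 2 * ((\<Sum>i\<in>UNIV. s $ i) - (\<Sum>i\<in>UNIV. s $ i * measure M {axis i 1}))"
      using e1 s1 by simp
    also have "\<dots> = 2 * (\<Sum>i\<in>UNIV. s $ i * (1 - measure M {axis i 1}))"
      by (simp add: sum_subtractf algebra_simps)
    finally show ?thesis .
  qed
  finally show ?thesis .
qed

lemma simplex_sets[measurable]: "(prob_simplex :: (real^'k) set) \<in> sets borel"
  unfolding prob_simplex_def by measurable

lemma mu_facts:
  fixes \<mu> :: "('x::polish_space \<times> (real^'k) \<times> nat) measure"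
  assumes mu: "classification_problem m \<mu>" and f: "det_predictor f"
  shows "prob_space \<mu>"
    and "(\<lambda>z. f (fst z) a) \<in> \<mu> \<rightarrow>\<^sub>M borel"
    and "(\<lambda>z. fst (snd z)) \<in> \<mu> \<rightarrow>\<^sub>M borel"
    and "\<And>P::nat \<Rightarrow> bool. {z \<in> space \<mu>. P (snd (snd z))} \<in> sets \<mu>"
    and "fst \<in> \<mu> \<rightarrow>\<^sub>M borel"
proof -
  have sm: "sets \<mu> = sets (borel \<Otimes>\<^sub>M (borel \<Otimes>\<^sub>M count_space UNIV))"
    and "prob_space \<mu>" using mu unfolding classification_problem_def by auto
  then show "prob_space \<mu>" by simp
  have fm[measurable]: "(\<lambda>x. f x a) \<in> borel_measurable borel" using f unfolding det_predictor_def by auto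
  show "(\<lambda>z. f (fst z) a) \<in> \<mu> \<rightarrow>\<^sub>M borel" by (subst measurable_cong_sets[OF sm refl]) measurable
  show "(\<lambda>z. fst (snd z)) \<in> \<mu> \<rightarrow>\<^sub>M borel" by (subst measurable_cong_sets[OF sm refl]) measurable
  show "fst \<in> \<mu> \<rightarrow>\<^sub>M borel" by (subst measurable_cong_sets[OF sm refl]) measurable
  fix P :: "nat \<Rightarrow> bool"
  have "(\<lambda>z. snd (snd z)) \<in> \<mu> \<rightarrow>\<^sub>M count_space UNIV" by (subst measurable_cong_sets[OF sm refl]) measurable
  from measurable_sets[OF this, of "{n. P n}"]
  show "{z \<in> space \<mu>. P (snd (snd z))} \<in> sets \<mu>" by (simp add: vimage_def Int_def conj_commute)
qed

lemma ind_meas: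
  fixes \<mu> :: "('x::polish_space \<times> (real^'k) \<times> nat) measure" and f :: "'x \<Rightarrow> nat \<Rightarrow> real^'k"
  assumes mu: "classification_problem m \<mu>" and f: "det_predictor f"
  shows "(indicator {z. snd (snd z) = a} :: _ \<Rightarrow> ennreal) \<in> borel_measurable \<mu>"
proof -
  have "(indicator {z \<in> space \<mu>. snd (snd z) = a} :: _ \<Rightarrow> ennreal) \<in> borel_measurable \<mu>"
    by (rule borel_measurable_indicator) (rule mu_facts(4)[OF mu f])
  then show ?thesis by (rule measurable_cong[THEN iffD1, rotated]) (auto simp: indicator_def)
qed

lemma pushf_nn:
  fixes \<mu> :: "('x::polish_space \<times> (real^'k) \<times> nat) measure" and f :: "'x \<Rightarrow> nat \<Rightarrow> real^'k"
  assumes mu: "classification_problem m \<mu>" and f: "det_predictor f"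
    and \<phi>: "\<phi> \<in> borel_measurable (borel :: (real^'k) measure)"
  shows "(\<integral>\<^sup>+s. \<phi> s \<partial>pushf \<mu> f a) = (1 / ennreal (probA \<mu> a)) * (\<integral>\<^sup>+z. indicator {z. snd (snd z) = a} z * \<phi> (f (fst z) a) \<partial>\<mu>)"
proof -
  have fm[measurable]: "(\<lambda>x. f x a) \<in> borel_measurable borel" using f unfolding det_predictor_def by auto
  have sm: "sets \<mu> = sets (borel \<Otimes>\<^sub>M (borel \<Otimes>\<^sub>M count_space UNIV))"
    using mu unfolding classification_problem_def by auto
  have \<phi>f: "(\<lambda>x. \<phi> (f x a)) \<in> borel_measurable borel" using measurable_compose[OF fm \<phi>] by simp
  define D where "D = density \<mu> (indicator {z. snd (snd z) = a})"
  have sD: "sets D = sets (borel \<Otimes>\<^sub>M (borel \<Otimes>\<^sub>M count_space UNIV))" using sm by (simp add: D_def)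
  have "(\<integral>\<^sup>+s. \<phi> s \<partial>pushf \<mu> f a) = (\<integral>\<^sup>+x. \<phi> (f x a) \<partial>muX \<mu> a)"
    unfolding pushf_def by (rule nn_integral_distr) (simp_all add: muX_def measurable_cong_sets[OF sets_scale_measure refl] \<phi> \<phi>f)
  also have "\<dots> = (1 / ennreal (probA \<mu> a)) * (\<integral>\<^sup>+x. \<phi> (f x a) \<partial>distr D borel fst)"
    unfolding muX_def D_def by (rule nn_integral_scale_measure) (simp add: \<phi>f)
  also have "(\<integral>\<^sup>+x. \<phi> (f x a) \<partial>distr D borel fst) = (\<integral>\<^sup>+z. \<phi> (f (fst z) a) \<partial>D)"
    by (rule nn_integral_distr) (simp_all add: measurable_cong_sets[OF sD refl] \<phi>f)
  also have "\<dots> = (\<integral>\<^sup>+z. indicator {z. snd (snd z) = a} z * \<phi> (f (fst z) a) \<partial>\<mu>)"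
    unfolding D_def
    by (rule nn_integral_density) (simp_all add: ind_meas[OF mu f] measurable_cong_sets[OF sm refl] measurable_compose[OF measurable_fst \<phi>f])
  finally show ?thesis .
qed

lemma probA_pos_inv:
  fixes \<mu> :: "('x::polish_space \<times> (real^'k) \<times> nat) measure"
  assumes mu: "classification_problem m \<mu>" and a: "a \<in> {1..m}"
  shows "probA \<mu> a > 0" "(1 / ennreal (probA \<mu> a)) * ennreal (probA \<mu> a) = 1"
proof -
  show P: "probA \<mu> a > 0" using mu a unfolding classification_problem_def probA_def by auto
  then show "(1 / ennreal (probA \<mu> a)) * ennreal (probA \<mu> a) = 1"
    by (simp add: ennreal_divide_times)
qed

lemma ind_integral:
  fixes \<mu> :: "('x::polish_space \<times> (real^'k) \<times> nat) measure" and f :: "'x \<Rightarrow> nat \<Rightarrow> real^'k"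
  assumes mu: "classification_problem m \<mu>" and f: "det_predictor f"
  shows "(\<integral>\<^sup>+z. indicator {z. snd (snd z) = a} z \<partial>\<mu>) = ennreal (probA \<mu> a)"
proof -
  interpret prob_space \<mu> using mu_facts(1)[OF mu f] .
  have "(\<integral>\<^sup>+z. indicator {z. snd (snd z) = a} z \<partial>\<mu>) = (\<integral>\<^sup>+z. indicator {z \<in> space \<mu>. snd (snd z) = a} z \<partial>\<mu>)"
    by (rule nn_integral_cong) (auto simp: indicator_def)
  also have "\<dots> = emeasure \<mu> {z \<in> space \<mu>. snd (snd z) = a}"
    by (rule nn_integral_indicator) (rule mu_facts(4)[OF mu f])
  finally show ?thesis by (simp add: probA_def emeasure_eq_measure)
qed

lemma pushf_props:
  fixes \<mu> :: "('x::polish_space \<times> (real^'k) \<times> nat) measure" and f :: "'x \<Rightarrow> nat \<Rightarrow> real^'k"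
  assumes mu: "classification_problem m \<mu>" and f: "det_predictor f" and a: "a \<in> {1..m}"
  shows "prob_space (pushf \<mu> f a)" "sets (pushf \<mu> f a) = sets borel"
    "AE s in pushf \<mu> f a. s \<in> prob_simplex"
proof -
  have fm[measurable]: "(\<lambda>x. f x a) \<in> borel_measurable borel" using f unfolding det_predictor_def by auto
  show ss: "sets (pushf \<mu> f a) = sets borel" by (simp add: pushf_def)
  have "emeasure (pushf \<mu> f a) (space (pushf \<mu> f a)) = (\<integral>\<^sup>+s. 1 \<partial>pushf \<mu> f a)"
    by simp
  also have "\<dots> = (1 / ennreal (probA \<mu> a)) * (\<integral>\<^sup>+z. indicator {z. snd (snd z) = a} z * 1 \<partial>\<mu>)"
    by (rule pushf_nn[OF mu f]) simp
  also have "\<dots> = 1" using ind_integral[OF mu f] probA_pos_inv[OF mu a] by simp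
  finally show "prob_space (pushf \<mu> f a)" by (rule prob_spaceI)
  have "AE x in muX \<mu> a. f x a \<in> prob_simplex" using f unfolding det_predictor_def by auto
  then show "AE s in pushf \<mu> f a. s \<in> prob_simplex"
    unfolding pushf_def
    by (subst AE_distr_iff) (simp_all add: muX_def measurable_cong_sets[OF sets_scale_measure refl])
qed

lemma cal_nn:
  fixes \<mu> :: "('x::polish_space \<times> (real^'k) \<times> nat) measure" and f :: "'x \<Rightarrow> nat \<Rightarrow> real^'k"
  assumes mu: "classification_problem m \<mu>" and f: "det_predictor f" and cal: "calibrated m \<mu> f"
    and a: "a \<in> {1..m}" and \<phi>: "\<phi> \<in> borel_measurable (borel :: (real^'k) measure)"
  shows "(\<integral>\<^sup>+z. indicator {z \<in> space \<mu>. fst (snd z) = axis i 1 \<and> snd (snd z) = a} z * \<phi> (f (fst z) a) \<partial>\<mu>)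
       = ennreal (probA \<mu> a) * (\<integral>\<^sup>+s. ennreal (s $ i) * \<phi> s \<partial>pushf \<mu> f a)"
proof -
  interpret prob_space \<mu> using mu_facts(1)[OF mu f] .
  define r where "r = pushf \<mu> f a"
  define P where "P = probA \<mu> a"
  have P0: "0 < P" using probA_pos_inv[OF mu a] by (simp add: P_def)
  have rp: "prob_space r" and rs: "sets r = sets borel" and rae: "AE s in r. s \<in> prob_simplex"
    using pushf_props[OF mu f a] unfolding r_def by auto
  interpret R: prob_space r by (rule rp)
  have gm: "(\<lambda>z. f (fst z) a) \<in> \<mu> \<rightarrow>\<^sub>M borel" by (rule mu_facts(2)[OF mu f])
  have ym: "(\<lambda>z. fst (snd z)) \<in> \<mu> \<rightarrow>\<^sub>M borel" by (rule mu_facts(3)[OF mu f])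
  define S where "S = {z \<in> space \<mu>. fst (snd z) = axis i 1 \<and> snd (snd z) = a}"
  have S1: "{z \<in> space \<mu>. fst (snd z) = axis i 1} \<in> sets \<mu>"
    using measurable_sets[OF ym, of "{axis i 1}"] by (simp add: vimage_def Int_def conj_commute)
  have S: "S \<in> sets \<mu>"
  proof -
    have "S = {z \<in> space \<mu>. fst (snd z) = axis i 1} \<inter> {z \<in> space \<mu>. snd (snd z) = a}"
      by (auto simp: S_def)
    then show ?thesis using S1 mu_facts(4)[OF mu f, of "\<lambda>n. n = a"] by auto
  qed
  define \<nu>1 where "\<nu>1 = distr (density \<mu> (indicator S)) borel (\<lambda>z. f (fst z) a)"
  define \<nu>2 where "\<nu>2 = density r (\<lambda>s. ennreal (P * s $ i))"
  have gmD: "(\<lambda>z. f (fst z) a) \<in> density \<mu> (indicator S) \<rightarrow>\<^sub>M borel"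
    using gm by simp
  have "\<nu>1 = \<nu>2"
  proof (rule measure_eqI)
    show "sets \<nu>1 = sets \<nu>2" by (simp add: \<nu>1_def \<nu>2_def rs)
    fix B assume "B \<in> sets \<nu>1"
    then have B[measurable]: "B \<in> sets borel" by (simp add: \<nu>1_def)
    have gB: "(\<lambda>z. f (fst z) a) -` B \<inter> space \<mu> \<in> sets \<mu>" by (rule measurable_sets[OF gm B])
    have "emeasure \<nu>1 B = emeasure (density \<mu> (indicator S)) ((\<lambda>z. f (fst z) a) -` B \<inter> space \<mu>)"
      unfolding \<nu>1_def by (subst emeasure_distr[OF gmD]) (simp_all add: B)
    also have "\<dots> = (\<integral>\<^sup>+z. indicator S z * indicator ((\<lambda>z. f (fst z) a) -` B \<inter> space \<mu>) z \<partial>\<mu>)"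
      by (rule emeasure_density) (simp_all add: S gB borel_measurable_indicator)
    also have "\<dots> = (\<integral>\<^sup>+z. indicator (S \<inter> ((\<lambda>z. f (fst z) a) -` B \<inter> space \<mu>)) z \<partial>\<mu>)"
      by (rule nn_integral_cong) (simp add: indicator_inter_arith)
    also have "\<dots> = emeasure \<mu> (S \<inter> ((\<lambda>z. f (fst z) a) -` B \<inter> space \<mu>))"
      by (rule nn_integral_indicator) (use S gB in auto)
    also have "S \<inter> ((\<lambda>z. f (fst z) a) -` B \<inter> space \<mu>)
        = {z \<in> space \<mu>. fst (snd z) = axis i 1 \<and> f (fst z) a \<in> B \<and> snd (snd z) = a}"
      by (auto simp: S_def)
    also have "emeasure \<mu> \<dots> = ennreal (P * (LINT s:B|r. s $ i))"
      using cal a B unfolding calibrated_def by (simp add: emeasure_eq_measure P_def r_def)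
    finally have e1: "emeasure \<nu>1 B = ennreal (P * (LINT s:B|r. s $ i))" .
    have bnd: "AE s in r. norm (P * (indicator B s *\<^sub>R s $ i)) \<le> P"
      using rae
    proof eventually_elim
      case (elim s)
      then have "0 \<le> s $ i" and "s $ i \<le> 1"
        using member_le_sum[of i UNIV "\<lambda>j. s $ j"] unfolding prob_simplex_def by auto
      then show ?case using P0 by (auto simp: indicator_def abs_mult)
    qed
    have int: "integrable r (\<lambda>s. P * (indicator B s *\<^sub>R s $ i))"
      by (rule R.integrable_const_bound[OF bnd]) (subst measurable_cong_sets[OF rs refl], measurable)
    have nn: "AE s in r. 0 \<le> P * (indicator B s *\<^sub>R s $ i)"
      using rae
    proof eventually_elim
      case (elim s)
      then show ?case using P0 unfolding prob_simplex_def by (auto simp: indicator_def)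
    qed
    have "emeasure \<nu>2 B = (\<integral>\<^sup>+s. ennreal (P * s $ i) * indicator B s \<partial>r)"
      unfolding \<nu>2_def by (rule emeasure_density) (simp_all add: measurable_cong_sets[OF rs refl] B rs)
    also have "\<dots> = (\<integral>\<^sup>+s. ennreal (P * (indicator B s *\<^sub>R s $ i)) \<partial>r)"
      by (rule nn_integral_cong) (simp add: indicator_def)
    also have "\<dots> = ennreal (\<integral>s. P * (indicator B s *\<^sub>R s $ i) \<partial>r)"
      by (rule nn_integral_eq_integral[OF int nn])
    also have "\<dots> = ennreal (P * (LINT s:B|r. s $ i))"
      by (simp add: set_lebesgue_integral_def)
    finally show "emeasure \<nu>1 B = emeasure \<nu>2 B" using e1 by simp
  qed
  have "(\<integral>\<^sup>+z. indicator S z * \<phi> (f (fst z) a) \<partial>\<mu>) = (\<integral>\<^sup>+z. \<phi> (f (fst z) a) \<partial>density \<mu> (indicator S))"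
    by (rule nn_integral_density[symmetric]) (simp_all add: S measurable_compose[OF gm \<phi>] borel_measurable_indicator)
  also have "\<dots> = (\<integral>\<^sup>+s. \<phi> s \<partial>\<nu>1)"
    unfolding \<nu>1_def by (rule nn_integral_distr[symmetric]) (simp_all add: gm \<phi>)
  also have "\<dots> = (\<integral>\<^sup>+s. \<phi> s \<partial>\<nu>2)" using \<open>\<nu>1 = \<nu>2\<close> by simp
  also have "\<dots> = (\<integral>\<^sup>+s. ennreal (P * s $ i) * \<phi> s \<partial>r)"
    unfolding \<nu>2_def by (rule nn_integral_density) (simp_all add: measurable_cong_sets[OF rs refl] \<phi>)
  also have "\<dots> = (\<integral>\<^sup>+s. ennreal P * (ennreal (s $ i) * \<phi> s) \<partial>r)"
    by (rule nn_integral_cong) (use P0 in \<open>simp add: ennreal_mult' mult.assoc\<close>)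
  also have "\<dots> = ennreal P * (\<integral>\<^sup>+s. ennreal (s $ i) * \<phi> s \<partial>r)"
    by (rule nn_integral_cmult) (subst measurable_cong_sets[OF rs refl], use \<phi> in measurable)
  finally show ?thesis by (simp add: S_def P_def r_def)
qed

lemma G_meas:
  fixes Hs :: "real^'k \<Rightarrow> (real^'k) measure"
  assumes Hs: "Hs \<in> borel \<rightarrow>\<^sub>M subprob_algebra borel"
  shows "(\<lambda>w. measure (Hs (fst w)) (UNIV - {snd w})) \<in> borel_measurable (borel \<Otimes>\<^sub>M borel)"
proof (rule measure_measurable_subprob_algebra2)
  have "{p \<in> space ((borel \<Otimes>\<^sub>M borel) \<Otimes>\<^sub>M borel). snd (fst p) = (snd p :: real^'k)} \<in> sets ((borel \<Otimes>\<^sub>M borel) \<Otimes>\<^sub>M (borel :: (real^'k) measure))"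
    by measurable
  then have "space ((borel \<Otimes>\<^sub>M borel) \<Otimes>\<^sub>M borel) - {p \<in> space ((borel \<Otimes>\<^sub>M borel) \<Otimes>\<^sub>M borel). snd (fst p) = (snd p :: real^'k)} \<in> sets ((borel \<Otimes>\<^sub>M borel) \<Otimes>\<^sub>M (borel :: (real^'k) measure))"
    by auto
  moreover have "(SIGMA w:space ((borel::(real^'k) measure) \<Otimes>\<^sub>M (borel::(real^'k) measure)). UNIV - {snd w}) = space ((borel \<Otimes>\<^sub>M borel) \<Otimes>\<^sub>M borel) - {p \<in> space ((borel \<Otimes>\<^sub>M borel) \<Otimes>\<^sub>M borel). snd (fst p) = (snd p :: real^'k)}"
    by (auto simp: space_pair_measure)
  ultimately show "(SIGMA w:space ((borel::(real^'k) measure) \<Otimes>\<^sub>M (borel::(real^'k) measure)). UNIV - {snd w}) \<in> sets ((borel \<Otimes>\<^sub>M borel) \<Otimes>\<^sub>M borel)"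
    by simp
  show "(\<lambda>w. Hs (fst w)) \<in> (borel \<Otimes>\<^sub>M borel) \<rightarrow>\<^sub>M subprob_algebra borel"
    using Hs by measurable
qed

lemma e_meas:
  fixes Hs :: "real^'k \<Rightarrow> (real^'k) measure"
  assumes Hs: "Hs \<in> borel \<rightarrow>\<^sub>M subprob_algebra borel"
  shows "(\<lambda>s. measure (Hs s) {c}) \<in> borel_measurable borel"
proof (rule measure_measurable_subprob_algebra2[OF _ Hs])
  have "(SIGMA x:space (borel::(real^'k) measure). {c}) = UNIV \<times> {c}" by auto
  then show "(SIGMA x:space (borel::(real^'k) measure). {c}) \<in> sets (borel \<Otimes>\<^sub>M borel)" by simp
qed

lemma err_eq:
  fixes \<mu> :: "('x::polish_space \<times> (real^'k) \<times> nat) measure" and f :: "'x \<Rightarrow> nat \<Rightarrow> real^'k"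
    and Hs :: "real^'k \<Rightarrow> (real^'k) measure"
  assumes mu: "classification_problem m \<mu>" and f: "det_predictor f" and cal: "calibrated m \<mu> f"
    and a: "a \<in> {1..m}" and Hp: "Hs \<in> borel \<rightarrow>\<^sub>M prob_algebra borel"
  shows "(\<integral>z. indicator {z. snd (snd z) = a} z * measure (Hs (f (fst z) a)) (UNIV - {fst (snd z)}) \<partial>\<mu>)
       = probA \<mu> a * enn2real (\<integral>\<^sup>+s. ennreal (\<Sum>i\<in>UNIV. s $ i * (1 - measure (Hs s) {axis i 1})) \<partial>pushf \<mu> f a)"
proof -
  interpret prob_space \<mu> using mu_facts(1)[OF mu f] .
  define r where "r = pushf \<mu> f a"
  define P where "P = probA \<mu> a"
  define e where "e = (\<lambda>i s. measure (Hs s) {axis i (1::real)})"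
  have P0: "0 < P" using probA_pos_inv[OF mu a] by (simp add: P_def)
  have rs: "sets r = sets borel" and rae: "AE s in r. s \<in> prob_simplex"
    using pushf_props[OF mu f a] unfolding r_def by auto
  have Hs: "Hs \<in> borel \<rightarrow>\<^sub>M subprob_algebra borel" using Hp measurable_prob_algebraD by blast
  have pH: "\<And>s. prob_space (Hs s)"
    using Hp by (auto dest!: measurable_space simp: space_prob_algebra)
  have sH: "\<And>s. sets (Hs s) = sets borel"
    using Hp by (auto dest!: measurable_space simp: space_prob_algebra)
  have e01: "0 \<le> e i s" "e i s \<le> 1" for i s
    using prob_space.prob_le_1[OF pH] by (auto simp: e_def)
  have em: "e i \<in> borel_measurable borel" for i
    unfolding e_def by (rule e_meas[OF Hs])
  have gm: "(\<lambda>z. f (fst z) a) \<in> \<mu> \<rightarrow>\<^sub>M borel" by (rule mu_facts(2)[OF mu f])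
  have ym: "(\<lambda>z. fst (snd z)) \<in> \<mu> \<rightarrow>\<^sub>M borel" by (rule mu_facts(3)[OF mu f])
  define G where "G = (\<lambda>z. indicator {z. snd (snd z) = a} z * measure (Hs (f (fst z) a)) (UNIV - {fst (snd z)}))"
  have Gm: "G \<in> borel_measurable \<mu>"
  proof -
    have pm: "(\<lambda>z. (f (fst z) a, fst (snd z))) \<in> \<mu> \<rightarrow>\<^sub>M borel \<Otimes>\<^sub>M borel"
      using gm ym by (rule measurable_Pair)
    have "(\<lambda>z. measure (Hs (fst (f (fst z) a, fst (snd z)))) (UNIV - {snd (f (fst z) a, fst (snd z))})) \<in> borel_measurable \<mu>"
      using measurable_compose[OF pm G_meas[OF Hs]] by simp
    then have "(\<lambda>z. measure (Hs (f (fst z) a)) (UNIV - {fst (snd z)})) \<in> borel_measurable \<mu>" by simp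
    moreover have "(indicator {z. snd (snd z) = a} :: _ \<Rightarrow> real) \<in> borel_measurable \<mu>"
    proof -
      have "(indicator {z \<in> space \<mu>. snd (snd z) = a} :: _ \<Rightarrow> real) \<in> borel_measurable \<mu>"
        by (rule borel_measurable_indicator) (rule mu_facts(4)[OF mu f])
      then show ?thesis by (rule measurable_cong[THEN iffD1, rotated]) (auto simp: indicator_def)
    qed
    ultimately show ?thesis unfolding G_def by (rule borel_measurable_times[rotated])
  qed
  have G0: "0 \<le> G z" for z by (simp add: G_def)
  define S where "S = (\<lambda>i. {z \<in> space \<mu>. fst (snd z) = axis i 1 \<and> snd (snd z) = a})"
  have Sm: "S i \<in> sets \<mu>" for i
  proof -
    have S1: "{z \<in> space \<mu>. fst (snd z) = axis i 1} \<in> sets \<mu>"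
      using measurable_sets[OF ym, of "{axis i 1}"] by (simp add: vimage_def Int_def conj_commute)
    have "S i = {z \<in> space \<mu>. fst (snd z) = axis i 1} \<inter> {z \<in> space \<mu>. snd (snd z) = a}"
      by (auto simp: S_def)
    then show ?thesis using S1 mu_facts(4)[OF mu f, of "\<lambda>n. n = a"] by auto
  qed
  have aeY: "AE z in \<mu>. fst (snd z) \<in> Ycal" using mu unfolding classification_problem_def by auto
  have "(\<integral>\<^sup>+z. ennreal (G z) \<partial>\<mu>) = (\<integral>\<^sup>+z. (\<Sum>i\<in>UNIV. indicator (S i) z * ennreal (1 - e i (f (fst z) a))) \<partial>\<mu>)"
  proof (rule nn_integral_cong_AE)
    show "AE z in \<mu>. ennreal (G z) = (\<Sum>i\<in>UNIV. indicator (S i) z * ennreal (1 - e i (f (fst z) a)))"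
      using aeY AE_space
    proof eventually_elim
      case (elim z)
      then obtain j where j: "fst (snd z) = axis j 1" unfolding Ycal_def by auto
      have Gz: "G z = indicator {z. snd (snd z) = a} z * (1 - e j (f (fst z) a))"
        unfolding G_def e_def j
        using prob_space.prob_compl[OF pH, of "{axis j 1}" "f (fst z) a"] sets_eq_imp_space_eq[OF sH]
        by (simp add: sH)
      have "(\<Sum>i\<in>UNIV. indicator (S i) z * ennreal (1 - e i (f (fst z) a)))
          = (\<Sum>i\<in>UNIV. if i = j then indicator {z. snd (snd z) = a} z * ennreal (1 - e j (f (fst z) a)) else 0)"
        by (rule sum.cong) (use elim j in \<open>auto simp: S_def indicator_def axis_eq_axis\<close>)
      also have "\<dots> = indicator {z. snd (snd z) = a} z * ennreal (1 - e j (f (fst z) a))"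
        by simp
      finally show ?case using Gz by (simp add: indicator_def)
    qed
  qed
  also have "\<dots> = (\<Sum>i\<in>UNIV. \<integral>\<^sup>+z. indicator (S i) z * ennreal (1 - e i (f (fst z) a)) \<partial>\<mu>)"
  proof (rule nn_integral_sum)
    fix i
    have "(\<lambda>z. ennreal (1 - e i (f (fst z) a))) \<in> borel_measurable \<mu>"
      using measurable_compose[OF gm em] by measurable
    then show "(\<lambda>z. indicator (S i) z * ennreal (1 - e i (f (fst z) a))) \<in> borel_measurable \<mu>"
      using Sm by measurable
  qed
  also have "\<dots> = (\<Sum>i\<in>UNIV. ennreal P * (\<integral>\<^sup>+s. ennreal (s $ i) * ennreal (1 - e i s) \<partial>r))"
  proof (rule sum.cong)
    fix i
    show "(\<integral>\<^sup>+z. indicator (S i) z * ennreal (1 - e i (f (fst z) a)) \<partial>\<mu>) = ennreal P * (\<integral>\<^sup>+s. ennreal (s $ i) * ennreal (1 - e i s) \<partial>r)"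
      unfolding S_def P_def r_def by (rule cal_nn[OF mu f cal a]) (use em in measurable)
  qed simp
  also have "\<dots> = ennreal P * (\<integral>\<^sup>+s. (\<Sum>i\<in>UNIV. ennreal (s $ i) * ennreal (1 - e i s)) \<partial>r)"
  proof -
    have "(\<lambda>s. ennreal (s $ i) * ennreal (1 - e i s)) \<in> borel_measurable r" for i
      by (subst measurable_cong_sets[OF rs refl]) (use em in measurable)
    then show ?thesis by (simp add: nn_integral_sum sum_distrib_left)
  qed
  also have "(\<integral>\<^sup>+s. (\<Sum>i\<in>UNIV. ennreal (s $ i) * ennreal (1 - e i s)) \<partial>r)
      = (\<integral>\<^sup>+s. ennreal (\<Sum>i\<in>UNIV. s $ i * (1 - e i s)) \<partial>r)"
  proof (rule nn_integral_cong_AE)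
    show "AE s in r. (\<Sum>i\<in>UNIV. ennreal (s $ i) * ennreal (1 - e i s)) = ennreal (\<Sum>i\<in>UNIV. s $ i * (1 - e i s))"
      using rae
    proof eventually_elim
      case (elim s)
      then have nn: "\<And>i. 0 \<le> s $ i" unfolding prob_simplex_def by auto
      have "(\<Sum>i\<in>UNIV. ennreal (s $ i) * ennreal (1 - e i s)) = (\<Sum>i\<in>UNIV. ennreal (s $ i * (1 - e i s)))"
        by (rule sum.cong) (use nn e01 in \<open>auto simp: ennreal_mult\<close>)
      also have "\<dots> = ennreal (\<Sum>i\<in>UNIV. s $ i * (1 - e i s))"
        by (rule sum_ennreal) (use nn e01 in auto)
      finally show ?case .
    qed
  qed
  finally have eq: "(\<integral>\<^sup>+z. ennreal (G z) \<partial>\<mu>) = ennreal P * (\<integral>\<^sup>+s. ennreal (\<Sum>i\<in>UNIV. s $ i * (1 - e i s)) \<partial>r)" .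
  have "(\<integral>z. G z \<partial>\<mu>) = enn2real (\<integral>\<^sup>+z. ennreal (G z) \<partial>\<mu>)"
    by (rule integral_eq_nn_integral[OF Gm]) (simp add: G0)
  also have "\<dots> = P * enn2real (\<integral>\<^sup>+s. ennreal (\<Sum>i\<in>UNIV. s $ i * (1 - e i s)) \<partial>r)"
    using eq P0 by (simp add: enn2real_mult)
  finally show ?thesis by (simp add: G_def P_def r_def e_def)
qed

lemma ae_eq_one:
  assumes "prob_space M" and g: "g \<in> borel_measurable M" and le: "\<And>x. g x \<le> 1"
    and int: "(\<integral>\<^sup>+x. g x \<partial>M) = 1"
  shows "AE x in M. g x = 1"
proof -
  interpret prob_space M by fact
  have "(\<integral>\<^sup>+x. 1 - g x \<partial>M) = (\<integral>\<^sup>+x. 1 \<partial>M) - (\<integral>\<^sup>+x. g x \<partial>M)"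
    by (rule nn_integral_diff) (use g le int in auto)
  also have "\<dots> = 0" using int by (simp add: emeasure_space_1)
  finally have "AE x in M. 1 - g x = 0"
    by (subst nn_integral_0_iff_AE[symmetric]) (use g in auto)
  then show ?thesis
  proof eventually_elim
    case (elim x)
    then show ?case using le[of x] by (metis verit_la_disequality ennreal_minus_eq_0)
  qed
qed

lemma per_a:
  fixes \<mu> :: "('x::polish_space \<times> (real^'k) \<times> nat) measure" and f :: "'x \<Rightarrow> nat \<Rightarrow> real^'k"
    and qstar \<rho> :: "(real^'k) measure" and \<gamma> :: "((real^'k) \<times> (real^'k)) measure"
    and K :: "real^'k \<Rightarrow> (real^'k) measure"
  assumes mu: "classification_problem m \<mu>" and f: "det_predictor f" and cal: "calibrated m \<mu> f"
    and a: "a \<in> {1..m}" and qstar: "qstar \<in> Qk"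
    and rho: "prob_space \<rho>" "sets \<rho> = sets borel" and rho_moment: "integrable \<rho> l1"
    and g: "\<gamma> \<in> couplings (push_kernel (pushf \<mu> f a) (noise_kernel \<rho>)) qstar"
      "transport_cost \<gamma> = W1e (push_kernel (pushf \<mu> f a) (noise_kernel \<rho>)) qstar"
    and K: "rcd_first \<gamma> (push_kernel (pushf \<mu> f a) (noise_kernel \<rho>)) K"
  shows "0 \<le> Err \<mu> (\<lambda>x a. push_kernel (push_kernel (return borel (f x a)) (noise_kernel \<rho>)) K) a - (1/2) * W1 (pushf \<mu> f a) qstar"
    and "Err \<mu> (\<lambda>x a. push_kernel (push_kernel (return borel (f x a)) (noise_kernel \<rho>)) K) a - (1/2) * W1 (pushf \<mu> f a) qstar
         \<le> (\<integral>n. l1 n \<partial>\<rho>)"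
proof -
  define r where "r = pushf \<mu> f a"
  define N where "N = noise_kernel \<rho>"
  define Hs where "Hs = (\<lambda>s. N s \<bind> K)"
  define P where "P = probA \<mu> a"
  define E where "E = (\<lambda>s. \<Sum>i\<in>UNIV. s $ i * (1 - measure (Hs s) {axis i (1::real)}))"
  have P0: "0 < P" using probA_pos_inv[OF mu a] by (simp add: P_def)
  have rp: "prob_space r" and rs: "sets r = sets borel" and rae: "AE s in r. s \<in> prob_simplex"
    using pushf_props[OF mu f a] unfolding r_def by auto
  have Np: "N \<in> (borel :: (real^'k) measure) \<rightarrow>\<^sub>M prob_algebra borel"
    unfolding N_def by (rule noise_meas[OF rho])
  have Ns: "N \<in> (borel :: (real^'k) measure) \<rightarrow>\<^sub>M subprob_algebra borel"
    using Np measurable_prob_algebraD by blast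
  have Kp: "K \<in> (borel :: (real^'k) measure) \<rightarrow>\<^sub>M prob_algebra borel"
    using K unfolding rcd_first_def by auto
  have Hp: "Hs \<in> (borel :: (real^'k) measure) \<rightarrow>\<^sub>M prob_algebra borel"
    unfolding Hs_def by (rule measurable_bind_prob_space[OF Np Kp])
  have Hsub: "Hs \<in> (borel :: (real^'k) measure) \<rightarrow>\<^sub>M subprob_algebra borel"
    using Hp measurable_prob_algebraD by blast
  have pH: "\<And>s. prob_space (Hs s)"
    using Hp by (auto dest!: measurable_space simp: space_prob_algebra)
  have sH: "\<And>s. sets (Hs s) = sets borel"
    using Hp by (auto dest!: measurable_space simp: space_prob_algebra)
  have Herr: "push_kernel (push_kernel (return borel (f x a)) N) K = Hs (f x a)" for x
    unfolding push_kernel_def Hs_def by (subst bind_return[OF Ns]) simp_all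
  have "Err \<mu> (\<lambda>x a. push_kernel (push_kernel (return borel (f x a)) N) K) a
      = (\<integral>z. indicator {z. snd (snd z) = a} z * measure (Hs (f (fst z) a)) (UNIV - {fst (snd z)}) \<partial>\<mu>) / P"
    unfolding Err_def P_def by (simp add: Herr)
  also have "\<dots> = enn2real (\<integral>\<^sup>+s. ennreal (E s) \<partial>r)"
    using err_eq[OF mu f cal a Hp] P0 by (simp add: P_def r_def E_def)
  finally have Err_eq: "Err \<mu> (\<lambda>x a. push_kernel (push_kernel (return borel (f x a)) (noise_kernel \<rho>)) K) a
      = enn2real (\<integral>\<^sup>+s. ennreal (E s) \<partial>r)" by (simp add: N_def)
  have g': "\<gamma> \<in> couplings (r \<bind> noise_kernel \<rho>) qstar" "transport_cost \<gamma> = W1e (r \<bind> noise_kernel \<rho>) qstar"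
    and K': "rcd_first \<gamma> (r \<bind> noise_kernel \<rho>) K"
    using g K by (simp_all add: r_def push_kernel_def)
  note C = core[OF rp rs rho g' K']
  define C where "C = (\<integral>\<^sup>+s. \<integral>\<^sup>+y. ennreal (l1 (s - y)) \<partial>Hs s \<partial>r)"
  have C1: "W1e r qstar \<le> C" using C(2) by (simp add: C_def Hs_def N_def)
  define EN where "EN = (\<integral>\<^sup>+n. ennreal (l1 n) \<partial>\<rho>)"
  have C2: "C \<le> W1e r qstar + 2 * EN" using C(3) by (simp add: C_def Hs_def N_def EN_def)
  have rH: "r \<bind> Hs = qstar" using C(1) by (simp add: Hs_def N_def)
  have qY: "emeasure qstar Ycal = 1" using qstar by (simp add: Qk_def)
  have Hr: "Hs \<in> r \<rightarrow>\<^sub>M subprob_algebra borel" using Hsub measurable_cong_sets[OF rs refl] by blast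
  have rne: "space r \<noteq> {}" using rp prob_space.not_empty by blast
  have "(\<integral>\<^sup>+s. emeasure (Hs s) Ycal \<partial>r) = 1"
    using emeasure_bind[OF rne Hr Ycal_sets] rH qY by simp
  then have aeH: "AE s in r. emeasure (Hs s) Ycal = 1"
    by (intro ae_eq_one[OF rp])
       (auto simp: measurable_cong_sets[OF rs refl] measurable_emeasure_kernel[OF Hsub Ycal_sets] prob_space.emeasure_le_1[OF pH])
  have "C = (\<integral>\<^sup>+s. ennreal (2 * E s) \<partial>r)"
    unfolding C_def
  proof (rule nn_integral_cong_AE)
    show "AE s in r. (\<integral>\<^sup>+y. ennreal (l1 (s - y)) \<partial>Hs s) = ennreal (2 * E s)"
      using aeH rae
    proof eventually_elim
      case (elim s)
      show ?case unfolding E_def by (rule pointwise[OF pH sH elim(1) elim(2)])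
    qed
  qed
  also have "\<dots> = 2 * (\<integral>\<^sup>+s. ennreal (E s) \<partial>r)"
  proof -
    have Em: "E \<in> borel_measurable r"
      unfolding E_def by (subst measurable_cong_sets[OF rs refl]) (use e_meas[OF Hsub] in measurable)
    have "(\<integral>\<^sup>+s. ennreal (2 * E s) \<partial>r) = (\<integral>\<^sup>+s. 2 * ennreal (E s) \<partial>r)"
      by (rule nn_integral_cong) (simp add: ennreal_mult')
    also have "\<dots> = 2 * (\<integral>\<^sup>+s. ennreal (E s) \<partial>r)"
      by (rule nn_integral_cmult) (use Em in measurable)
    finally show ?thesis .
  qed
  finally have CX: "C = 2 * (\<integral>\<^sup>+s. ennreal (E s) \<partial>r)" .
  define X where "X = (\<integral>\<^sup>+s. ennreal (E s) \<partial>r)"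
  have "X \<le> (\<integral>\<^sup>+s. 1 \<partial>r)"
    unfolding X_def
  proof (rule nn_integral_mono_AE)
    show "AE s in r. ennreal (E s) \<le> 1"
      using rae
    proof eventually_elim
      case (elim s)
      then have nn: "\<And>i. 0 \<le> s $ i" and s1: "(\<Sum>i\<in>UNIV. s $ i) = 1" unfolding prob_simplex_def by auto
      have "E s \<le> (\<Sum>i\<in>UNIV. s $ i)"
        unfolding E_def
        by (rule sum_mono) (use nn prob_space.prob_le_1[OF pH] measure_nonneg in \<open>auto intro: mult_left_le\<close>)
      then show ?case using s1 by simp
    qed
  qed
  then have Xfin: "X < \<infinity>" using rp by (simp add: prob_space.emeasure_space_1 le_less_trans)
  have ENeq: "EN = ennreal (\<integral>n. l1 n \<partial>\<rho>)"
    unfolding EN_def by (rule nn_integral_eq_integral[OF rho_moment]) (simp add: l1_nonneg)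
  have W1fin: "W1e r qstar < \<infinity>"
  proof -
    have "2 * X < \<infinity>" using Xfin by (simp add: ennreal_mult_less_top)
    moreover have "W1e r qstar \<le> 2 * X" using C1 CX by (simp add: X_def)
    ultimately show ?thesis by (rule le_less_trans[rotated])
  qed
  have L1: "enn2real (W1e r qstar) \<le> 2 * enn2real X"
  proof -
    have "enn2real (W1e r qstar) \<le> enn2real (2 * X)"
      using C1 CX Xfin by (intro enn2real_mono) (auto simp: X_def ennreal_mult_less_top)
    then show ?thesis by (simp add: enn2real_mult)
  qed
  have L2: "2 * enn2real X \<le> enn2real (W1e r qstar) + 2 * (\<integral>n. l1 n \<partial>\<rho>)"
  proof -
    have "2 * X \<le> W1e r qstar + 2 * ennreal (\<integral>n. l1 n \<partial>\<rho>)"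
      using C2 CX ENeq by (simp add: X_def)
    then have "enn2real (2 * X) \<le> enn2real (W1e r qstar + 2 * ennreal (\<integral>n. l1 n \<partial>\<rho>))"
      using W1fin by (intro enn2real_mono) (auto simp: ennreal_mult_less_top)
    moreover have "0 \<le> (\<integral>n. l1 n \<partial>\<rho>)" by (simp add: l1_nonneg)
    ultimately show ?thesis using W1fin
      by (simp add: enn2real_mult enn2real_plus ennreal_mult_less_top flip: ennreal_numeral ennreal_mult)
  qed
  have ErrX: "Err \<mu> (\<lambda>x a. push_kernel (push_kernel (return borel (f x a)) (noise_kernel \<rho>)) K) a = enn2real X"
    using Err_eq by (simp add: X_def)
  have W1X: "W1 (pushf \<mu> f a) qstar = enn2real (W1e r qstar)" by (simp add: W1_def r_def)
  show "0 \<le> Err \<mu> (\<lambda>x a. push_kernel (push_kernel (return borel (f x a)) (noise_kernel \<rho>)) K) a - (1/2) * W1 (pushf \<mu> f a) qstar"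
    using L1 ErrX W1X by simp
  show "Err \<mu> (\<lambda>x a. push_kernel (push_kernel (return borel (f x a)) (noise_kernel \<rho>)) K) a - (1/2) * W1 (pushf \<mu> f a) qstar
         \<le> (\<integral>n. l1 n \<partial>\<rho>)"
    using L2 ErrX W1X by simp
qed
theorem proposition4p3:
  fixes m :: nat
    and \<mu> :: "('x::polish_space \<times> (real^'k) \<times> nat) measure"
    and f :: "'x \<Rightarrow> nat \<Rightarrow> real^'k"
    and qstar :: "(real^'k) measure"
    and \<rho> :: "(real^'k) measure"
    and \<gamma> :: "nat \<Rightarrow> ((real^'k) \<times> (real^'k)) measure"
    and \<kappa> :: "nat \<Rightarrow> real^'k \<Rightarrow> (real^'k) measure"
  assumes k2: "CARD('k) \<ge> 2"
    and mu: "classification_problem m \<mu>"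
    and f: "det_predictor f"
    and cal: "calibrated m \<mu> f"
    and qstar: "qstar \<in> Qk"
    and qstar_min: "\<forall>q\<in>Qk. (\<Sum>a=1..m. W1 (pushf \<mu> f a) qstar) \<le> (\<Sum>a=1..m. W1 (pushf \<mu> f a) q)"
    and rho: "prob_space \<rho>" "sets \<rho> = sets borel" "absolutely_continuous lborel \<rho>"
    and rho_moment: "integrable \<rho> l1"
    and gamma: "\<forall>a\<in>{1..m}.
        \<gamma> a \<in> couplings (push_kernel (pushf \<mu> f a) (noise_kernel \<rho>)) qstar \<and>
        transport_cost (\<gamma> a) = W1e (push_kernel (pushf \<mu> f a) (noise_kernel \<rho>)) qstar"
    and kappa: "\<forall>a\<in>{1..m}. rcd_first (\<gamma> a) (push_kernel (pushf \<mu> f a) (noise_kernel \<rho>)) (\<kappa> a)"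
  shows "0 \<le> (\<Sum>a=1..m. Err \<mu> (\<lambda>x a. push_kernel (push_kernel (return borel (f x a)) (noise_kernel \<rho>)) (\<kappa> a)) a)
              - (1/2) * (\<Sum>a=1..m. W1 (pushf \<mu> f a) qstar)
       \<and> (\<Sum>a=1..m. Err \<mu> (\<lambda>x a. push_kernel (push_kernel (return borel (f x a)) (noise_kernel \<rho>)) (\<kappa> a)) a)
              - (1/2) * (\<Sum>a=1..m. W1 (pushf \<mu> f a) qstar)
         \<le> real m * (\<integral>n. l1 n \<partial>\<rho>)"
  proof -
  let ?H = "\<lambda>x a. push_kernel (push_kernel (return borel (f x a)) (noise_kernel \<rho>)) (\<kappa> a)"
  define D where "D = (\<lambda>a. Err \<mu> ?H a - (1/2) * W1 (pushf \<mu> f a) qstar)"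
  have A: "0 \<le> D a \<and> D a \<le> (\<integral>n. l1 n \<partial>\<rho>)" if a: "a \<in> {1..m}" for a
  proof -
    have eq: "Err \<mu> ?H a = Err \<mu> (\<lambda>x a'. push_kernel (push_kernel (return borel (f x a')) (noise_kernel \<rho>)) (\<kappa> a)) a"
      unfolding Err_def by simp
    show ?thesis
      unfolding D_def eq
      using per_a[OF mu f cal a qstar rho(1) rho(2) rho_moment, of "\<gamma> a" "\<kappa> a"] gamma kappa a by auto
  qed
  have sumD: "(\<Sum>a=1..m. Err \<mu> ?H a) - (1/2) * (\<Sum>a=1..m. W1 (pushf \<mu> f a) qstar) = (\<Sum>a=1..m. D a)"
    unfolding D_def by (simp add: sum_subtractf sum_distrib_left)
  have "0 \<le> (\<Sum>a=1..m. D a)" by (rule sum_nonneg) (use A in auto)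
  moreover have "(\<Sum>a=1..m. D a) \<le> (\<Sum>a=1..m. (\<integral>n. l1 n \<partial>\<rho>))" by (rule sum_mono) (use A in auto)
  ultimately show ?thesis unfolding sumD by simp
qed
end
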